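(* Let $M_m$ satisfy $G_m\ge0$. If $u,v\in M_m$ satisfy $0<r_u<r_v$ and $\gamma_u$ has finite turn angle, then $T_{\gamma_u}\le T_{\gamma_v}$, with equality if and only if $G_m$ vanishes on $[r_u,\infty)$.
   Context: For a smooth function $m\colon[0,\infty)\to[0,\infty)$ with $m(0)=0$, $m'(0)=1$, $m>0$ on $(0,\infty)$ and smooth odd extension, $M_m$ is $\mathbb R^2$ with metric $dr^2+m(r)^2d\theta^2$ (polar coordinates $(r,\theta)$ about origin $o$), curvature $G_m=-m''/m$. For $q\ne o$, $r_q$ is its $r$-coordinate and $\gamma_q\colon[0,\infty)\to M_m$ is the unit speed geodesic starting at $q$ in direction $\partial_\theta$. For a geodesic $\gamma$ on $[0,\infty)$ not passing through $o$, its turn angle is $T_\gamma=\int_0^\infty|\dot\theta_{\gamma(s)}|\,ds\in[0,\infty]$. *)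

theory Defs
  imports "HOL-Analysis.Analysis"
begin

definition smooth_fun :: "(real \<Rightarrow> real) \<Rightarrow> bool" where
  "smooth_fun f \<longleftrightarrow> (\<forall>k x. ((deriv ^^ k) f) differentiable (at x))"

text \<open>Admissible warping function m (given as its smooth odd extension to the real line).\<close>
definition admissible_m :: "(real \<Rightarrow> real) \<Rightarrow> bool" where
  "admissible_m m \<longleftrightarrow> smooth_fun m \<and> (\<forall>x. m (- x) = - m x) \<and>
     m 0 = 0 \<and> deriv m 0 = 1 \<and> (\<forall>r>0. m r > 0)"

definition Gm :: "(real \<Rightarrow> real) \<Rightarrow> real \<Rightarrow> real" where
  "Gm m r = - deriv (deriv m) r / m r"

text \<open>A unit speed geodesic on [0,oo) of the metric dr^2 + m(r)^2 dtheta^2, not passing through o,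
  written in polar coordinates (rho s, phi s) with phi a continuous lift of the angle.
  Geodesic equations (Christoffel symbols of the metric):
    rho'' = m(rho) m'(rho) phi'^2,   phi'' = - 2 m'(rho)/m(rho) rho' phi'.
  gamma_q: starts at q = (rq, thq) with unit velocity in direction d/dtheta,
  i.e. rho'(0) = 0, phi'(0) = 1 / m(rq).\<close>
definition gamma_polar ::
  "(real \<Rightarrow> real) \<Rightarrow> real \<Rightarrow> real \<Rightarrow> (real \<Rightarrow> real) \<Rightarrow> (real \<Rightarrow> real) \<Rightarrow> bool" where
  "gamma_polar m rq thq \<rho> \<phi> \<longleftrightarrow>
     (\<forall>s\<ge>0. \<rho> s > 0) \<and> \<rho> 0 = rq \<and> \<phi> 0 = thq \<and>
     (\<exists>\<rho>' \<phi>'. \<rho>' 0 = 0 \<and> \<phi>' 0 = 1 / m rq \<and>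
        (\<forall>s\<ge>0.
          (\<rho> has_real_derivative \<rho>' s) (at s within {0..}) \<and>
          (\<phi> has_real_derivative \<phi>' s) (at s within {0..}) \<and>
          (\<rho>' has_real_derivative (m (\<rho> s) * deriv m (\<rho> s) * (\<phi>' s)\<^sup>2)) (at s within {0..}) \<and>
          (\<phi>' has_real_derivative (- 2 * deriv m (\<rho> s) / m (\<rho> s) * \<rho>' s * \<phi>' s))
              (at s within {0..})))"

definition turn_angle :: "(real \<Rightarrow> real) \<Rightarrow> ennreal" where
  "turn_angle \<phi> = set_nn_integral lborel {0..} (\<lambda>s. ennreal \<bar>deriv \<phi> s\<bar>)"

end

theory Submission
  imports Defs
begin

locale warp =
  fixes m :: "real \<Rightarrow> real"
  assumes adm: "admissible_m m" and Gnn: "\<forall>r>0. Gm m r \<ge> 0"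
begin

lemma m0: "m 0 = 0" and dm0: "deriv m 0 = 1" and mpos: "r > 0 \<Longrightarrow> m r > 0"
  using adm by (auto simp: admissible_m_def)

lemma smooth: "((deriv ^^ k) m) differentiable (at x)"
  using adm by (auto simp: admissible_m_def smooth_fun_def)

lemma dm: "(m has_real_derivative deriv m x) (at x)"
  using smooth[of 0 x] by (simp add: DERIV_deriv_iff_real_differentiable)

lemma ddm: "(deriv m has_real_derivative deriv (deriv m) x) (at x)"
  using smooth[of 1 x] by (simp add: DERIV_deriv_iff_real_differentiable)

lemma cont_ddm: "isCont (deriv (deriv m)) x"
  using smooth[of 2 x] by (simp add: differentiable_imp_continuous_within numeral_2_eq_2)

lemma cont_m: "isCont m x" using dm by (rule DERIV_isCont)
lemma cont_dm: "isCont (deriv m) x" using ddm by (rule DERIV_isCont)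

lemma conton_m: "continuous_on S m" using cont_m by (simp add: continuous_at_imp_continuous_on)
lemma conton_dm: "continuous_on S (deriv m)" using cont_dm by (simp add: continuous_at_imp_continuous_on)

lemma ddm_nonpos: "r > 0 \<Longrightarrow> deriv (deriv m) r \<le> 0"
proof -
  assume r: "r > 0"
  have "Gm m r \<ge> 0" using Gnn r by auto
  then have "- deriv (deriv m) r / m r \<ge> 0" by (simp add: Gm_def)
  with mpos[OF r] show ?thesis by (simp add: divide_simps split: if_splits)
qed

lemma dm_antimono: assumes "0 \<le> x" "x \<le> y" shows "deriv m y \<le> deriv m x"
  using assms by (intro DERIV_nonpos_imp_decreasing_open[OF \<open>x \<le> y\<close>] conton_dm)
     (auto intro!: exI[of _ "deriv (deriv m) _"] ddm ddm_nonpos)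

lemma dm_nonneg: assumes r: "r \<ge> 0" shows "deriv m r \<ge> 0"
proof (rule ccontr)
  assume "\<not> ?thesis"
  then have d: "deriv m r < 0" by simp
  define x where "x = r + m r / (- deriv m r) + 1"
  have mr: "m r \<ge> 0" using mpos[of r] r m0 by (cases "r = 0") auto
  have "m r / (- deriv m r) \<ge> 0" using mr d by (intro divide_nonneg_pos) auto
  then have rx1: "x \<ge> r + 1" by (simp add: x_def)
  then have rx: "r \<le> x" by simp
  have "m x - deriv m r * x \<le> m r - deriv m r * r"
    using rx r
    by (intro DERIV_nonpos_imp_decreasing_open[OF rx] continuous_intros conton_m)
       (auto intro!: exI[of _ "deriv m _ - deriv m r"] derivative_eq_intros dm dm_antimono)
  then have "m x \<le> m r + deriv m r * (x - r)" by (simp add: algebra_simps)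
  also have "\<dots> = - deriv m r * (-1)" using d by (simp add: x_def field_simps)
  finally have "m x < 0" using d by simp
  moreover have "x > 0" using rx1 r by simp
  ultimately show False using mpos by force
qed

lemma m_mono: assumes "0 \<le> x" "x \<le> y" shows "m x \<le> m y"
  using assms by (intro DERIV_nonneg_imp_increasing_open[OF \<open>x \<le> y\<close>] conton_m)
     (auto intro!: exI[of _ "deriv m _"] dm dm_nonneg)

lemma m_nonneg: "r \<ge> 0 \<Longrightarrow> m r \<ge> 0"
  using m_mono[of 0 r] m0 by simp

end

locale geod = warp +
  fixes r0 :: real and \<rho> \<phi> \<rho>' \<phi>' :: "real \<Rightarrow> real"
  assumes r0: "0 < r0" and rpos: "\<And>s. s \<ge> 0 \<Longrightarrow> \<rho> s > 0" and r00: "\<rho> 0 = r0"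
    and dr0: "\<rho>' 0 = 0" and dp0: "\<phi>' 0 = 1 / m r0"
    and dr: "\<And>s. s \<ge> 0 \<Longrightarrow> (\<rho> has_real_derivative \<rho>' s) (at s within {0..})"
    and dp: "\<And>s. s \<ge> 0 \<Longrightarrow> (\<phi> has_real_derivative \<phi>' s) (at s within {0..})"
    and ddr: "\<And>s. s \<ge> 0 \<Longrightarrow> (\<rho>' has_real_derivative (m (\<rho> s) * deriv m (\<rho> s) * (\<phi>' s)\<^sup>2)) (at s within {0..})"
    and ddp: "\<And>s. s \<ge> 0 \<Longrightarrow> (\<phi>' has_real_derivative (- 2 * deriv m (\<rho> s) / m (\<rho> s) * \<rho>' s * \<phi>' s)) (at s within {0..})"
begin

lemma alg_energy: "(M::real) \<noteq> 0 \<Longrightarrow> (M * D * P\<^sup>2 * R + (M * D * P\<^sup>2) * R) +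
      ((D * R * M + D * R * M) * (P * P) +
       ((- 2 * D / M * R * P) * P + (- 2 * D / M * R * P) * P) * (M * M)) = 0"
  by (simp add: field_simps power2_eq_square)

lemma alg_clairaut: "(M::real) \<noteq> 0 \<Longrightarrow> (D * R * M + D * R * M) * P + (- 2 * D / M * R * P) * (M * M) = 0"
  by (simp add: field_simps)

definition "c = m r0"
lemma c_pos: "c > 0" using mpos r0 by (simp add: c_def)

lemma mr_pos: "s \<ge> 0 \<Longrightarrow> m (\<rho> s) > 0" using mpos rpos by blast

lemma dmr: "s \<ge> 0 \<Longrightarrow> ((\<lambda>s. m (\<rho> s)) has_real_derivative deriv m (\<rho> s) * \<rho>' s) (at s within {0..})"
  by (rule DERIV_chain2[OF dm dr])

lemma clairaut: assumes s: "s \<ge> 0" shows "m (\<rho> s)^2 * \<phi>' s = c"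
proof -
  have D: "((\<lambda>s. m (\<rho> s) * m (\<rho> s) * \<phi>' s) has_real_derivative 0) (at s within {0..})" if "s \<in> {0..}" for s
  proof -
    have s: "s \<ge> 0" using that by simp
    show ?thesis
      by (rule DERIV_cong[OF DERIV_mult[OF DERIV_mult[OF dmr[OF s] dmr[OF s]] ddp[OF s]]])
         (rule alg_clairaut, use mr_pos[OF s] in simp)
  qed
  obtain k where k: "\<forall>x\<in>{0..}. m (\<rho> x) * m (\<rho> x) * \<phi>' x = k"
    using has_field_derivative_zero_constant[OF convex_real_interval(1) D] by blast
  have "k = c" using k[rule_format, of 0] r00 dp0 mpos[OF r0] by (simp add: c_def)
  then show ?thesis using k s by (simp add: power2_eq_square)
qed

lemma energy: assumes s: "s \<ge> 0" shows "(\<rho>' s)^2 + m (\<rho> s)^2 * (\<phi>' s)^2 = 1"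
proof -
  have D: "((\<lambda>s. \<rho>' s * \<rho>' s + m (\<rho> s) * m (\<rho> s) * (\<phi>' s * \<phi>' s)) has_real_derivative 0) (at s within {0..})" if "s \<in> {0..}" for s
  proof -
    have s: "s \<ge> 0" using that by simp
    have nz: "m (\<rho> s) \<noteq> 0" using mr_pos[OF s] by simp
    show ?thesis
      by (rule DERIV_cong[OF DERIV_add[OF DERIV_mult[OF ddr[OF s] ddr[OF s]] DERIV_mult[OF DERIV_mult[OF dmr[OF s] dmr[OF s]] DERIV_mult[OF ddp[OF s] ddp[OF s]]]]])
         (rule alg_energy[OF nz])
  qed
  obtain k where k: "\<forall>x\<in>{0..}. \<rho>' x * \<rho>' x + m (\<rho> x) * m (\<rho> x) * (\<phi>' x * \<phi>' x) = k"
    using has_field_derivative_zero_constant[OF convex_real_interval(1) D] by blast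
  have "k = 1" using k[rule_format, of 0] r00 dp0 dr0 mpos[OF r0] by (simp add: field_simps)
  then show ?thesis using k s by (simp add: power2_eq_square)
qed

lemma dphi: "s \<ge> 0 \<Longrightarrow> \<phi>' s = c / m (\<rho> s)^2"
  using clairaut[of s] mr_pos[of s] by (simp add: field_simps)

lemma dphi_pos: "s \<ge> 0 \<Longrightarrow> \<phi>' s > 0"
  using dphi[of s] mr_pos[of s] c_pos by simp

lemma dr_sq: "s \<ge> 0 \<Longrightarrow> (\<rho>' s)^2 = 1 - c^2 / m (\<rho> s)^2"
  using energy[of s] dphi[of s] mr_pos[of s] by (simp add: field_simps power2_eq_square)

lemma at_pos: "(s::real) > 0 \<Longrightarrow> at s within {0..} = at s"
  proof -
  assume s: "s > 0"
  have "interior {0::real..} = {0<..}" by (rule interior_Ici[of "-1"]) simp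
  then have "s \<in> interior {0..}" using s by simp
  then show "at s within {0..} = at s" by (rule at_within_interior)
qed

lemma cont_within:
  assumes "\<And>s. s \<ge> 0 \<Longrightarrow> (f has_real_derivative f' s) (at s within {0..})"
  shows "continuous_on {0..} f"
  using assms by (metis DERIV_continuous atLeast_iff continuous_on_eq_continuous_within)

lemma mono_within:
  assumes "\<And>s. s \<ge> 0 \<Longrightarrow> (f has_real_derivative f' s) (at s within {0..})"
    and "\<And>s. s > 0 \<Longrightarrow> f' s \<ge> 0" and "0 \<le> x" "x \<le> y"
  shows "f x \<le> f y"
proof (rule DERIV_nonneg_imp_increasing_open[OF \<open>x \<le> y\<close>])
  have "continuous_on {0..} f" by (rule cont_within[OF assms(1)])
  then show "continuous_on {x..y} f"
    by (rule continuous_on_subset) (use assms(3) in auto)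
  fix z assume "x < z" "z < y"
  then show "\<exists>y. (f has_real_derivative y) (at z) \<and> 0 \<le> y"
    using assms(1)[of z] assms(2)[of z] assms(3) at_pos[of z] by auto
qed

lemma ddr_nonneg: "s \<ge> 0 \<Longrightarrow> m (\<rho> s) * deriv m (\<rho> s) * (\<phi>' s)\<^sup>2 \<ge> 0"
  using mr_pos[of s] dm_nonneg[of "\<rho> s"] rpos[of s] by simp

lemma dr_mono: "0 \<le> x \<Longrightarrow> x \<le> y \<Longrightarrow> \<rho>' x \<le> \<rho>' y"
  by (rule mono_within[OF ddr]) (auto intro: ddr_nonneg)

lemma dr_nonneg: "s \<ge> 0 \<Longrightarrow> \<rho>' s \<ge> 0"
  using dr_mono[of 0 s] dr0 by simp

lemma r_mono: "0 \<le> x \<Longrightarrow> x \<le> y \<Longrightarrow> \<rho> x \<le> \<rho> y"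
  by (rule mono_within[OF dr]) (auto intro: dr_nonneg)

lemma r_ge: "s \<ge> 0 \<Longrightarrow> \<rho> s \<ge> r0" using r_mono[of 0 s] r00 by simp

lemma deriv_phi: "s > 0 \<Longrightarrow> deriv \<phi> s = \<phi>' s"
  using dp[of s] at_pos[of s] by (simp add: DERIV_imp_deriv)

lemma turn_angle_eq: "turn_angle \<phi> = (\<integral>\<^sup>+s. ennreal (\<phi>' s) * indicator {0<..} s \<partial>lborel)"
  unfolding turn_angle_def
proof (rule nn_integral_cong_AE)
  show "AE x in lborel. ennreal \<bar>deriv \<phi> x\<bar> * indicator {0..} x = ennreal (\<phi>' x) * indicator {0<..} x"
    using AE_lborel_singleton[of 0]
  proof eventually_elim
    fix x :: real assume "x \<noteq> 0"
    then consider "x > 0" | "x < 0" by linarith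
    then show "ennreal \<bar>deriv \<phi> x\<bar> * indicator {0..} x = ennreal (\<phi>' x) * indicator {0<..} x"
    proof cases
      case 1
      then have "deriv \<phi> x = \<phi>' x" "\<phi>' x > 0" using deriv_phi dphi_pos by auto
      with 1 show ?thesis by simp
    next
      case 2 then show ?thesis by simp
    qed
  qed
qed

end

lemma emeasure_Ioi_top: "emeasure lborel {(0::real)<..} = \<infinity>"
proof -
  have "of_nat n \<le> emeasure lborel {(0::real)<..}" for n
  proof -
    have "emeasure lborel {0<..<real n} \<le> emeasure lborel {(0::real)<..}"
      by (rule emeasure_mono) auto
    then show ?thesis by (simp add: ennreal_of_nat_eq_real_of_nat)
  qed
  then have "(SUP n. of_nat n :: ennreal) \<le> emeasure lborel {(0::real)<..}"
    by (intro SUP_least) auto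
  then show ?thesis by (simp add: ennreal_SUP_of_nat_eq_top top_unique)
qed

lemma SUP_ind: "(SUP n. (v::ennreal) * indicator (A n) x) = v * indicator (\<Union>n. A n) x"
proof (cases "x \<in> (\<Union>n. A n)")
  case True
  then obtain n where n: "x \<in> A n" by auto
  show ?thesis
  proof (rule antisym)
    show "(SUP n. v * indicator (A n) x) \<le> v * indicator (\<Union>n. A n) x"
      using True by (intro SUP_least) (auto simp: indicator_def)
    show "v * indicator (\<Union>n. A n) x \<le> (SUP n. v * indicator (A n) x)"
      using True n by (intro SUP_upper2[of n]) (auto simp: indicator_def)
  qed
next
  case False
  then show ?thesis by (auto simp: indicator_def)
qed

context geod
begin

lemma T_inf: assumes M: "\<And>r. r \<ge> 0 \<Longrightarrow> m r \<le> M" shows "turn_angle \<phi> = \<infinity>"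
proof -
  have Mpos: "M > 0" using M[of r0] mpos[OF r0] r0 by simp
  have le: "ennreal (c / M^2) * indicator {0<..} s \<le> ennreal (\<phi>' s) * indicator {0<..} s" for s
  proof (cases "s > 0")
    case True
    then have s: "s \<ge> 0" by simp
    have "m (\<rho> s)^2 \<le> M^2" using M[of "\<rho> s"] mr_pos[OF s] rpos[OF s]
      by (intro power_mono) auto
    then have "c / M^2 \<le> c / m (\<rho> s)^2" using c_pos mr_pos[OF s] Mpos
      by (intro divide_left_mono) (auto intro: mult_pos_pos)
    then show ?thesis using True dphi[OF s] by (auto simp: indicator_def intro: ennreal_leI)
  qed (auto simp: indicator_def)
  have "(\<integral>\<^sup>+(s::real). ennreal (c / M^2) * indicator {0<..} s \<partial>lborel) \<le> turn_angle \<phi>"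
    unfolding turn_angle_eq by (rule nn_integral_mono) (rule le)
  moreover have "(\<integral>\<^sup>+(s::real). ennreal (c / M^2) * indicator {0<..} s \<partial>lborel) = \<infinity>"
    using c_pos Mpos by (simp add: nn_integral_cmult_indicator emeasure_Ioi_top ennreal_mult_top)
  ultimately show ?thesis by (simp add: top_unique)
qed

end

locale warpU = warp +
  assumes unb: "\<And>M. \<exists>r\<ge>0. m r > M"
begin

lemma dm_pos: assumes r: "r \<ge> 0" shows "deriv m r > 0"
proof (rule ccontr)
  assume "\<not> ?thesis"
  then have d0: "deriv m r = 0" using dm_nonneg[OF r] by simp
  have dx: "deriv m x = 0" if "x \<ge> r" for x
    using dm_antimono[OF r that] dm_nonneg[of x] that r d0 by simp
  have d: "(m has_real_derivative 0) (at x)" if "x \<ge> r" for x using dm[of x] dx[OF that] by simp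
  have "m y \<le> m r" if "y \<ge> 0" for y
  proof (cases "y \<le> r")
    case True then show ?thesis using m_mono that by simp
  next
    case False
    then have "m r \<ge> m y"
      by (intro DERIV_nonpos_imp_decreasing_open[of r y] conton_m)
         (auto intro!: exI[of _ 0] d)
    then show ?thesis by simp
  qed
  then show False using unb[of "m r"] by force
qed

lemma m_strict: assumes "0 \<le> x" "x < y" shows "m x < m y"
  using assms by (intro DERIV_pos_imp_increasing[OF \<open>x < y\<close>])
     (auto intro!: exI[of _ "deriv m _"] dm dm_pos)

lemma m_surj: assumes "y \<ge> 0" shows "\<exists>r\<ge>0. m r = y"
proof -
  obtain R where R: "R \<ge> 0" "m R > y" using unb by blast
  have "\<exists>r. 0 \<le> r \<and> r \<le> R \<and> m r = y"
    using assms R m0 by (intro IVT' conton_m) auto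
  then show ?thesis by auto
qed

definition minv :: "real \<Rightarrow> real" where
  "minv y = (if y < 0 then y else (THE r. 0 \<le> r \<and> m r = y))"

lemma minv: assumes "y \<ge> 0" shows "minv y \<ge> 0" "m (minv y) = y"
proof -
  have ex: "\<exists>!r. 0 \<le> r \<and> m r = y"
  proof -
    obtain r where "r \<ge> 0" "m r = y" using m_surj[OF assms] by blast
    moreover have "r' = r" if "0 \<le> r'" "m r' = y" for r'
      using m_strict[of r r'] m_strict[of r' r] that \<open>r \<ge> 0\<close> \<open>m r = y\<close>
      by (cases "r < r'"; cases "r' < r") auto
    ultimately show ?thesis by blast
  qed
  have "0 \<le> (THE r. 0 \<le> r \<and> m r = y) \<and> m (THE r. 0 \<le> r \<and> m r = y) = y"
    by (rule theI'[OF ex])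
  then show "minv y \<ge> 0" "m (minv y) = y" using assms by (auto simp: minv_def)
qed

lemma minv_m: assumes "r \<ge> 0" shows "minv (m r) = r"
proof -
  have y: "m r \<ge> 0" using m_nonneg assms by simp
  show ?thesis
    using minv[OF y] m_strict[of r "minv (m r)"] m_strict[of "minv (m r)" r] assms
    by (cases "r < minv (m r)"; cases "minv (m r) < r") auto
qed

lemma minv_less: assumes "0 \<le> y1" "y1 < y2" shows "minv y1 < minv y2"
proof (rule ccontr)
  assume "\<not> ?thesis"
  then have "m (minv y2) \<le> m (minv y1)"
    using minv[of y2] assms by (intro m_mono) auto
  then show False using minv[of y1] minv[of y2] assms by simp
qed

lemma minv_mono: "mono minv"
proof (rule monoI)
  fix x y :: real assume xy: "x \<le> y"
  show "minv x \<le> minv y"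
  proof (cases "x < 0")
    case True
    then show ?thesis using xy minv[of y] by (cases "y < 0") (auto simp: minv_def)
  next
    case False
    then show ?thesis using xy minv_less[of x y] by (cases "x = y") auto
  qed
qed

lemma minv_meas[measurable]: "minv \<in> borel_measurable borel"
  by (rule borel_measurable_mono[OF minv_mono])

lemma dm_meas[measurable]: "deriv m \<in> borel_measurable borel"
  by (rule borel_measurable_continuous_onI[OF conton_dm])

definition fw :: "real \<Rightarrow> real \<Rightarrow> real" where
  "fw c w = 1 / (w * sqrt (w^2 - 1) * deriv m (minv (c * w)))"

lemma fw_meas[measurable]: "(\<lambda>w. ennreal (fw c w)) \<in> borel_measurable borel"
  unfolding fw_def by measurable

lemma fw_nonneg: assumes "c > 0" "w > 1" shows "fw c w > 0"
proof -
  have "minv (c * w) \<ge> 0" using minv[of "c*w"] assms by simp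
  then have "deriv m (minv (c * w)) > 0" by (rule dm_pos)
  moreover have "sqrt (w^2 - 1) > 0" using assms by (simp add: power_strict_mono[of 1 w 2, simplified])
  ultimately show ?thesis using assms unfolding fw_def by simp
qed

end

locale geodU = geod + warpU
begin

lemma dmr_pos: "s \<ge> 0 \<Longrightarrow> deriv m (\<rho> s) > 0"
  using dm_pos rpos[of s] by simp

lemma at_deriv: "s > 0 \<Longrightarrow> (f has_real_derivative D) (at s within {0..}) \<Longrightarrow> (f has_real_derivative D) (at s)"
  using at_pos by simp

lemma cont_r: "continuous_on {0..} \<rho>" by (rule cont_within[OF dr])
lemma cont_dr: "continuous_on {0..} \<rho>'" by (rule cont_within[OF ddr])

lemma dr_pos: assumes s: "s > 0" shows "\<rho>' s > 0"
proof -
  have "\<rho>' 0 < \<rho>' s"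
  proof (rule DERIV_pos_imp_increasing_open[OF s])
    fix x assume x: "0 < x" "x < s"
    have "m (\<rho> x) * deriv m (\<rho> x) * (\<phi>' x)\<^sup>2 > 0"
      using mr_pos[of x] dmr_pos[of x] dphi_pos[of x] x by simp
    then show "\<exists>y. (\<rho>' has_real_derivative y) (at x) \<and> y > 0"
      using at_deriv[OF x(1) ddr[OF less_imp_le[OF x(1)]]] by blast
  next
    show "continuous_on {0..s} \<rho>'" using cont_dr by (rule continuous_on_subset) auto
  qed
  then show ?thesis using dr0 by simp
qed

lemma r_strict: assumes "0 \<le> x" "x < y" shows "\<rho> x < \<rho> y"
proof (rule DERIV_pos_imp_increasing_open[OF \<open>x < y\<close>])
  fix z assume z: "x < z" "z < y"
  then show "\<exists>y. (\<rho> has_real_derivative y) (at z) \<and> y > 0"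
    using at_deriv[of z, OF _ dr[of z]] dr_pos[of z] assms by force
next
  show "continuous_on {x..y} \<rho>" using cont_r by (rule continuous_on_subset) (use assms in auto)
qed

lemma mr_gt: "s > 0 \<Longrightarrow> m (\<rho> s) > c"
  using r_strict[of 0 s] r00 m_strict[of r0 "\<rho> s"] r0 by (simp add: c_def)

definition "g s = m (\<rho> s) / c"
definition "g' s = deriv m (\<rho> s) * \<rho>' s / c"

lemma g_within: "s \<ge> 0 \<Longrightarrow> (g has_real_derivative g' s) (at s within {0..})"
  unfolding g_def[abs_def] g'_def by (rule DERIV_cdivide[OF dmr])

lemma g_deriv: "s > 0 \<Longrightarrow> (g has_real_derivative g' s) (at s)"
  using at_deriv g_within by simp

lemma cont_g: "continuous_on {0..} g" by (rule cont_within[OF g_within])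

lemma cont_g': "continuous_on {0..} g'"
proof -
  have "continuous_on {0..} (\<lambda>s. deriv m (\<rho> s))"
    by (rule continuous_on_compose2[OF conton_dm cont_r]) auto
  then show ?thesis unfolding g'_def using c_pos
    by (intro continuous_intros cont_dr) auto
qed

lemma g'_nonneg: "s \<ge> 0 \<Longrightarrow> g' s \<ge> 0"
  unfolding g'_def using dmr_pos[of s] dr_nonneg[of s] c_pos by simp

lemma g0: "g 0 = 1" unfolding g_def using r00 c_pos by (simp add: c_def)

lemma g_mono: "0 \<le> x \<Longrightarrow> x \<le> y \<Longrightarrow> g x \<le> g y"
  unfolding g_def using c_pos r_mono m_mono rpos
  by (simp add: divide_right_mono less_imp_le)

lemma g_gt1: "s > 0 \<Longrightarrow> g s > 1"
  unfolding g_def using mr_gt[of s] c_pos by simp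

lemma key_id: assumes s: "s > 0" shows "fw c (g s) * g' s = \<phi>' s"
proof -
  have s0: "s \<ge> 0" using s by simp
  define M where "M = m (\<rho> s)"
  define w where "w = M / c"
  have Mc: "M > c" using mr_gt[OF s] by (simp add: M_def)
  have cp: "c > 0" by (rule c_pos)
  have w1: "w > 1" using Mc cp by (simp add: w_def)
  have cw: "c * w = M" using cp by (simp add: w_def)
  have mi: "minv (c * w) = \<rho> s" using cw minv_m[of "\<rho> s"] rpos[OF s0] by (simp add: M_def)
  define S where "S = sqrt (w^2 - 1)"
  have S: "S > 0" using w1 by (simp add: S_def power_strict_mono[of 1 w 2, simplified])
  have S2: "S^2 = w^2 - 1" using w1 by (simp add: S_def power_strict_mono[of 1 w 2, simplified] less_imp_le)
  have "(\<rho>' s)^2 = (c * S / M)^2"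
    using dr_sq[OF s0] S2 cp Mc by (simp add: M_def[symmetric] w_def power_divide field_simps)
  then have R: "\<rho>' s = c * S / M"
    using dr_nonneg[OF s0] S cp Mc by (subst (asm) power2_eq_iff_nonneg) auto
  have D: "deriv m (\<rho> s) > 0" using dmr_pos[OF s0] .
  have "fw c (g s) * g' s = 1 / (w * S * deriv m (\<rho> s)) * (deriv m (\<rho> s) * (c * S / M) / c)"
    unfolding fw_def g'_def g_def by (simp add: M_def[symmetric] w_def[symmetric] mi S_def[symmetric] R)
  also have "\<dots> = c / M^2" using D S cp Mc by (simp add: w_def field_simps power2_eq_square)
  also have "\<dots> = \<phi>' s" using dphi[OF s0] by (simp add: M_def)
  finally show ?thesis .
qed

lemma subst: assumes ab: "0 < a" "a < b"
  shows "(\<integral>\<^sup>+x. ennreal (fw c x) * indicator {g a..g b} x \<partial>lborel)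
       = (\<integral>\<^sup>+x. ennreal (\<phi>' x) * indicator {a..b} x \<partial>lborel)"
proof -
  have "(\<integral>\<^sup>+x. ennreal (fw c x) * indicator {g a..g b} x \<partial>lborel)
       = (\<integral>\<^sup>+x. ennreal (fw c (g x)) * ennreal (g' x) * indicator {a..b} x \<partial>lborel)"
  proof (rule nn_integral_substitution_aux[where g' = g'])
    show "continuous_on {a..b} g'" using cont_g' by (rule continuous_on_subset) (use ab in auto)
  qed (use ab g_deriv g'_nonneg in auto)
  also have "\<dots> = (\<integral>\<^sup>+x. ennreal (\<phi>' x) * indicator {a..b} x \<partial>lborel)"
  proof (rule nn_integral_cong)
    fix x :: real
    show "ennreal (fw c (g x)) * ennreal (g' x) * indicator {a..b} x = ennreal (\<phi>' x) * indicator {a..b} x"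
    proof (cases "x \<in> {a..b}")
      case True
      then have x: "x > 0" using ab by auto
      have "ennreal (fw c (g x)) * ennreal (g' x) = ennreal (fw c (g x) * g' x)"
        using g'_nonneg[of x] x by (simp add: ennreal_mult'')
      then show ?thesis using key_id[OF x] by simp
    qed simp
  qed
  finally show ?thesis .
qed

end

context geodU
begin

lemma r_unb: "\<exists>s\<ge>0. \<rho> s \<ge> R"
proof -
  have d1: "\<rho>' 1 > 0" using dr_pos[of 1] by simp
  have lin: "\<rho> s \<ge> \<rho> 1 + \<rho>' 1 * (s - 1)" if s: "s \<ge> 1" for s
  proof -
    have "\<rho> 1 - \<rho>' 1 * 1 \<le> \<rho> s - \<rho>' 1 * s"
    proof (rule DERIV_nonneg_imp_increasing_open[OF s])
      fix x assume x: "1 < x" "x < s"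
      have "((\<lambda>x. \<rho> x - \<rho>' 1 * x) has_real_derivative \<rho>' x - \<rho>' 1 * 1) (at x)"
        using x by (intro DERIV_diff DERIV_cmult at_deriv[OF _ dr] DERIV_ident) auto
      moreover have "\<rho>' x - \<rho>' 1 * 1 \<ge> 0" using dr_mono[of 1 x] x by simp
      ultimately show "\<exists>y. ((\<lambda>x. \<rho> x - \<rho>' 1 * x) has_real_derivative y) (at x) \<and> 0 \<le> y" by blast
    next
      have "continuous_on {1..s} \<rho>" using cont_r by (rule continuous_on_subset) auto
      then show "continuous_on {1..s} (\<lambda>x. \<rho> x - \<rho>' 1 * x)" by (intro continuous_intros)
    qed
    then show ?thesis by (simp add: algebra_simps)
  qed
  define s where "s = max 1 (1 + (R - \<rho> 1) / \<rho>' 1)"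
  have s1: "s \<ge> 1" by (simp add: s_def)
  have "\<rho>' 1 * (s - 1) \<ge> R - \<rho> 1"
  proof -
    have "s - 1 \<ge> (R - \<rho> 1) / \<rho>' 1" by (simp add: s_def)
    then have "\<rho>' 1 * (s - 1) \<ge> \<rho>' 1 * ((R - \<rho> 1) / \<rho>' 1)" using d1 by (intro mult_left_mono) auto
    then show ?thesis using d1 by simp
  qed
  then show ?thesis using lin[OF s1] s1 by (intro exI[of _ s]) auto
qed

lemma g_unb: "\<exists>s\<ge>0. g s \<ge> w"
proof -
  obtain R where R: "R \<ge> 0" "m R > c * w" using unb by blast
  obtain s where s: "s \<ge> 0" "\<rho> s \<ge> R" using r_unb by blast
  have "m (\<rho> s) \<ge> m R" using m_mono R s by simp
  then have "g s \<ge> w" using R c_pos by (simp add: g_def field_simps)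
  then show ?thesis using s by blast
qed

lemma g_near0: assumes w: "w > 1" shows "\<exists>d>0. \<forall>s. 0 \<le> s \<and> s < d \<longrightarrow> g s < w"
proof -
  have "\<forall>x\<in>{0::real..}. \<forall>\<epsilon>>0. \<exists>\<delta>>0. \<forall>x'\<in>{0..}. dist x' x < \<delta> \<longrightarrow> dist (g x') (g x) < \<epsilon>"
    using cont_g unfolding continuous_on_iff .
  from this[rule_format, of 0 "w - 1"] w
  obtain d where d: "d > 0" "\<forall>x'\<in>{0..}. dist x' 0 < d \<longrightarrow> dist (g x') (g 0) < w - 1" by auto
  have "g s < w" if "0 \<le> s" "s < d" for s
    using d(2)[rule_format, of s] that g0 by (auto simp: dist_real_def)
  then show ?thesis using d(1) by blast
qed

definition "A n = {1 / (real n + 2) .. real n + 2}"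
definition "B n = {g (1 / (real n + 2)) .. g (real n + 2)}"

lemma A_mono: "A n \<subseteq> A (Suc n)"
proof -
  have "1 / (real (Suc n) + 2) \<le> 1 / (real n + 2)" by (intro divide_left_mono) auto
  then show ?thesis by (auto simp: A_def)
qed

lemma B_mono: "B n \<subseteq> B (Suc n)"
proof -
  have "1 / (real (Suc n) + 2) \<le> 1 / (real n + 2)" by (intro divide_left_mono) auto
  then have "g (1 / (real (Suc n) + 2)) \<le> g (1 / (real n + 2))" by (intro g_mono) auto
  moreover have "g (real n + 2) \<le> g (real (Suc n) + 2)" by (intro g_mono) auto
  ultimately show ?thesis by (auto simp: B_def)
qed

lemma nat_big: "\<exists>n. real n + 2 \<ge> x \<and> 1 / (real n + 2) < d" if "d > 0" for x d :: real
proof -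
  define n where "n = nat \<lceil>max x (1 / d)\<rceil>"
  have "real n \<ge> max x (1 / d)" unfolding n_def by linarith
  then have n1: "real n + 2 \<ge> x" and n2: "real n + 2 > 1 / d" by auto
  have "1 / (real n + 2) < d" using n2 that by (simp add: field_simps)
  then show ?thesis using n1 by blast
qed

lemma A_Un: "(\<Union>n. A n) = {0<..}"
proof
  show "(\<Union>n. A n) \<subseteq> {0<..}"
    by (auto simp: A_def) (smt (verit) divide_pos_pos of_nat_0_le_iff)
  show "{0<..} \<subseteq> (\<Union>n. A n)"
  proof
    fix x :: real assume "x \<in> {0<..}"
    then have x: "x > 0" by simp
    obtain n where "real n + 2 \<ge> x" "1 / (real n + 2) < x" using nat_big[OF x] by blast
    then show "x \<in> (\<Union>n. A n)" unfolding A_def by (intro UN_I[of n]) auto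
  qed
qed

lemma B_Un: "(\<Union>n. B n) = {1<..}"
proof
  show "(\<Union>n. B n) \<subseteq> {1<..}"
  proof
    fix x assume "x \<in> (\<Union>n. B n)"
    then obtain n where "x \<in> B n" by blast
    moreover have "g (1 / (real n + 2)) > 1" by (intro g_gt1) auto
    ultimately show "x \<in> {1<..}" by (auto simp: B_def)
  qed
  show "{1<..} \<subseteq> (\<Union>n. B n)"
  proof
    fix w :: real assume "w \<in> {1<..}"
    then have w: "w > 1" by simp
    obtain d where d: "d > 0" "\<forall>s. 0 \<le> s \<and> s < d \<longrightarrow> g s < w" using g_near0[OF w] by blast
    obtain s where s: "s \<ge> 0" "g s \<ge> w" using g_unb by blast
    obtain n where n: "real n + 2 \<ge> s" "1 / (real n + 2) < d" using nat_big[OF d(1)] by blast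
    have "g (1 / (real n + 2)) < w" using d(2) n(2) by simp
    moreover have "g s \<le> g (real n + 2)" using s n by (intro g_mono) auto
    ultimately show "w \<in> (\<Union>n. B n)" using s by (auto simp: B_def intro!: exI[of _ n])
  qed
qed

lemma meas_A: "(\<lambda>x. ennreal (\<phi>' x) * indicator (A n) x) \<in> borel_measurable borel"
proof -
  have "0 \<le> 1 / (real n + 2)" by simp
  then have sub: "A n \<subseteq> {0..}" by (auto simp: A_def)
  have co: "continuous_on (A n) \<phi>'" using cont_within[OF ddp] sub by (rule continuous_on_subset)
  have [measurable]: "(\<lambda>x. indicator (A n) x *\<^sub>R \<phi>' x) \<in> borel_measurable borel"
    by (rule borel_measurable_continuous_on_indicator[OF _ co]) (simp add: A_def)
  have eq: "(\<lambda>x. ennreal (\<phi>' x) * indicator (A n) x) = (\<lambda>x. ennreal (indicator (A n) x *\<^sub>R \<phi>' x))"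
    by (auto simp: indicator_def fun_eq_iff)
  show ?thesis unfolding eq by measurable
qed

theorem TA: "turn_angle \<phi> = (\<integral>\<^sup>+x. ennreal (fw c x) * indicator {1<..} x \<partial>lborel)"
proof -
  have "turn_angle \<phi> = (\<integral>\<^sup>+x. (SUP n. ennreal (\<phi>' x) * indicator (A n) x) \<partial>lborel)"
    unfolding turn_angle_eq SUP_ind A_Un ..
  also have "\<dots> = (SUP n. \<integral>\<^sup>+x. ennreal (\<phi>' x) * indicator (A n) x \<partial>lborel)"
  proof (rule nn_integral_monotone_convergence_SUP)
    show "incseq (\<lambda>n x. ennreal (\<phi>' x) * indicator (A n) x)"
      using A_mono by (intro incseq_SucI le_funI mult_left_mono) (auto simp: indicator_def)
  qed (simp add: meas_A)
  also have "\<dots> = (SUP n. \<integral>\<^sup>+x. ennreal (fw c x) * indicator (B n) x \<partial>lborel)"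
  proof (rule SUP_cong[OF refl])
    fix n
    have "1 / (real n + 2) < real n + 2"
      by (smt (verit) divide_le_eq_1_pos of_nat_0_le_iff)
    then show "(\<integral>\<^sup>+x. ennreal (\<phi>' x) * indicator (A n) x \<partial>lborel) = (\<integral>\<^sup>+x. ennreal (fw c x) * indicator (B n) x \<partial>lborel)"
      unfolding A_def B_def by (intro subst[symmetric]) auto
  qed
  also have "\<dots> = (\<integral>\<^sup>+x. (SUP n. ennreal (fw c x) * indicator (B n) x) \<partial>lborel)"
  proof (rule nn_integral_monotone_convergence_SUP[symmetric])
    show "incseq (\<lambda>n x. ennreal (fw c x) * indicator (B n) x)"
      using B_mono by (intro incseq_SucI le_funI mult_left_mono) (auto simp: indicator_def)
  qed (simp add: B_def)
  also have "\<dots> = (\<integral>\<^sup>+x. ennreal (fw c x) * indicator {1<..} x \<partial>lborel)"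
    unfolding SUP_ind B_Un ..
  finally show ?thesis .
qed

end

context warpU
begin

lemma fw_mono: assumes c: "0 < c1" "c1 \<le> c2" and w: "w > 1" shows "fw c1 w \<le> fw c2 w"
proof -
  define x1 where "x1 = minv (c1 * w)"
  define x2 where "x2 = minv (c2 * w)"
  have x1: "x1 \<ge> 0" using minv[of "c1 * w"] c w by (simp add: x1_def)
  have "x1 \<le> x2" unfolding x1_def x2_def using c w by (intro monoD[OF minv_mono]) simp
  then have D: "deriv m x2 \<le> deriv m x1" using x1 by (rule dm_antimono[rotated])
  have D2: "deriv m x2 > 0" using x1 \<open>x1 \<le> x2\<close> dm_pos by simp
  have S: "sqrt (w^2 - 1) > 0" using w by (simp add: power_strict_mono[of 1 w 2, simplified])
  have "w * sqrt (w^2 - 1) * deriv m x2 \<le> w * sqrt (w^2 - 1) * deriv m x1"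
    using D S w by (intro mult_left_mono) auto
  then show ?thesis unfolding fw_def x1_def[symmetric] x2_def[symmetric]
    using D2 S w by (intro divide_left_mono) auto
qed

lemma fw_less:
  assumes c: "0 < c1" "c1 < c2" and w: "w > 1"
    and xy: "\<And>y. minv (c1 * w) < y \<Longrightarrow> deriv m y < deriv m (minv (c1 * w))"
  shows "fw c1 w < fw c2 w"
proof -
  define x1 where "x1 = minv (c1 * w)"
  define x2 where "x2 = minv (c2 * w)"
  have x1: "x1 \<ge> 0" using minv[of "c1 * w"] c w by (simp add: x1_def)
  have "x1 < x2" unfolding x1_def x2_def using c w by (intro minv_less) auto
  then have D: "deriv m x2 < deriv m x1" using xy by (simp add: x1_def)
  have D2: "deriv m x2 > 0" using x1 \<open>x1 < x2\<close> dm_pos by simp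
  have S: "sqrt (w^2 - 1) > 0" using w by (simp add: power_strict_mono[of 1 w 2, simplified])
  have "w * sqrt (w^2 - 1) * deriv m x2 < w * sqrt (w^2 - 1) * deriv m x1"
    using D S w by (intro mult_strict_left_mono) auto
  then show ?thesis unfolding fw_def x1_def[symmetric] x2_def[symmetric]
    using D2 S w by (intro divide_strict_left_mono) auto
qed

end

lemma geodU_TA:
  assumes "admissible_m m" "\<forall>r>0. Gm m r \<ge> 0" "\<And>M. \<exists>r\<ge>0. m r > M" "0 < r0"
    and "gamma_polar m r0 th0 \<rho> \<phi>"
  shows "turn_angle \<phi> = (\<integral>\<^sup>+x. ennreal (warpU.fw m (m r0) x) * indicator {1<..} x \<partial>lborel)"
proof -
  from assms(5) obtain \<rho>' \<phi>' where g: "(\<forall>s\<ge>0. \<rho> s > 0)" "\<rho> 0 = r0" "\<rho>' 0 = 0" "\<phi>' 0 = 1 / m r0"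
     "\<forall>s\<ge>0.
          (\<rho> has_real_derivative \<rho>' s) (at s within {0..}) \<and>
          (\<phi> has_real_derivative \<phi>' s) (at s within {0..}) \<and>
          (\<rho>' has_real_derivative (m (\<rho> s) * deriv m (\<rho> s) * (\<phi>' s)\<^sup>2)) (at s within {0..}) \<and>
          (\<phi>' has_real_derivative (- 2 * deriv m (\<rho> s) / m (\<rho> s) * \<rho>' s * \<phi>' s))
              (at s within {0..})"
    unfolding gamma_polar_def by blast
  interpret G: geodU m r0 \<rho> \<phi> \<rho>' \<phi>'
    by unfold_locales (use assms g in auto)
  show ?thesis using G.TA by (simp add: G.c_def)
qed

lemma geod_inf:
  assumes "admissible_m m" "\<forall>r>0. Gm m r \<ge> 0" "\<And>r. r \<ge> 0 \<Longrightarrow> m r \<le> M" "0 < r0"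
    and "gamma_polar m r0 th0 \<rho> \<phi>"
  shows "turn_angle \<phi> = \<infinity>"
proof -
  from assms(5) obtain \<rho>' \<phi>' where g: "(\<forall>s\<ge>0. \<rho> s > 0)" "\<rho> 0 = r0" "\<rho>' 0 = 0" "\<phi>' 0 = 1 / m r0"
     "\<forall>s\<ge>0.
          (\<rho> has_real_derivative \<rho>' s) (at s within {0..}) \<and>
          (\<phi> has_real_derivative \<phi>' s) (at s within {0..}) \<and>
          (\<rho>' has_real_derivative (m (\<rho> s) * deriv m (\<rho> s) * (\<phi>' s)\<^sup>2)) (at s within {0..}) \<and>
          (\<phi>' has_real_derivative (- 2 * deriv m (\<rho> s) / m (\<rho> s) * \<rho>' s * \<phi>' s))
              (at s within {0..})"
    unfolding gamma_polar_def by blast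
  interpret G: geod m r0 \<rho> \<phi> \<rho>' \<phi>'
    by unfold_locales (use assms g in auto)
  show ?thesis using G.T_inf assms(3) by blast
qed

theorem proposition4p1:
  fixes m :: "real \<Rightarrow> real" and ru rv thu thv :: real
    and \<rho>u \<phi>u \<rho>v \<phi>v :: "real \<Rightarrow> real"
  assumes "admissible_m m"
    and "\<forall>r>0. Gm m r \<ge> 0"
    and "0 < ru" and "ru < rv"
    and "gamma_polar m ru thu \<rho>u \<phi>u"
    and "gamma_polar m rv thv \<rho>v \<phi>v"
    and "turn_angle \<phi>u < \<infinity>"
  shows "turn_angle \<phi>u \<le> turn_angle \<phi>v \<and>
         (turn_angle \<phi>u = turn_angle \<phi>v \<longleftrightarrow> (\<forall>r\<ge>ru. Gm m r = 0))"
proof -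
  have unb: "\<exists>r\<ge>0. m r > M" for M
  proof (rule ccontr)
    assume "\<not> ?thesis"
    then have "\<And>r. r \<ge> 0 \<Longrightarrow> m r \<le> M" by force
    then have "turn_angle \<phi>u = \<infinity>" using geod_inf assms(1,2,3,5) by blast
    then show False using assms(7) by simp
  qed
  interpret W: warpU m using assms(1,2) unb by unfold_locales auto
  have rv0: "0 < rv" using assms(3,4) by simp
  define cu where "cu = m ru"
  define cv where "cv = m rv"
  have cu: "cu > 0" using W.mpos assms(3) by (simp add: cu_def)
  have cuv: "cu < cv" using W.m_strict[of ru rv] assms(3,4) by (simp add: cu_def cv_def)
  have Tu: "turn_angle \<phi>u = (\<integral>\<^sup>+x. ennreal (W.fw cu x) * indicator {1<..} x \<partial>lborel)"
    unfolding cu_def by (rule geodU_TA[OF assms(1,2) unb assms(3,5)])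
  have Tv: "turn_angle \<phi>v = (\<integral>\<^sup>+x. ennreal (W.fw cv x) * indicator {1<..} x \<partial>lborel)"
    unfolding cv_def by (rule geodU_TA[OF assms(1,2) unb rv0 assms(6)])
  have le: "ennreal (W.fw cu x) * indicator {1<..} x \<le> ennreal (W.fw cv x) * indicator {1<..} x" for x
    using W.fw_mono[of cu cv x] cu cuv by (auto simp: indicator_def intro: ennreal_leI)
  have part1: "turn_angle \<phi>u \<le> turn_angle \<phi>v"
    unfolding Tu Tv by (rule nn_integral_mono) (rule le)
  have part2: "turn_angle \<phi>u = turn_angle \<phi>v \<longleftrightarrow> (\<forall>r\<ge>ru. Gm m r = 0)"
  proof
    assume flat: "\<forall>r\<ge>ru. Gm m r = 0"
    have dd0: "deriv (deriv m) r = 0" if "r \<ge> ru" for r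
      using flat that W.mpos[of r] assms(3) by (auto simp: Gm_def)
    have dconst: "deriv m r = deriv m ru" if "r \<ge> ru" for r
    proof (cases "r = ru")
      case False
      then have "ru < r" using that by simp
      then have "deriv m r = deriv m ru"
      proof (rule DERIV_isconst_end[OF _ W.conton_dm])
        fix x assume "ru < x" "x < r"
        then have "deriv (deriv m) x = 0" by (intro dd0) simp
        then show "(deriv m has_real_derivative 0) (at x)" using W.ddm[of x] by simp
      qed
      then show ?thesis .
    qed simp
    have "W.fw cu x = W.fw cv x" if "x > 1" for x
    proof -
      have a: "minv1 \<ge> ru" if "minv1 = W.minv (c * x)" "c \<ge> cu" for c minv1
      proof -
        have "c \<le> c * x" using \<open>c \<ge> cu\<close> \<open>x > 1\<close> cu by (simp add: mult_le_cancel_left1)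
        then have "cu \<le> c * x" using \<open>c \<ge> cu\<close> by linarith
        then have "W.minv cu \<le> W.minv (c * x)" by (rule monoD[OF W.minv_mono])
        then show ?thesis using that W.minv_m[of ru] assms(3) by (simp add: cu_def)
      qed
      have "deriv m (W.minv (cu * x)) = deriv m (W.minv (cv * x))"
        using dconst[OF a[OF refl, of cu]] dconst[OF a[OF refl, of cv]] cuv by simp
      then show ?thesis by (simp add: W.fw_def)
    qed
    then show "turn_angle \<phi>u = turn_angle \<phi>v"
      unfolding Tu Tv by (intro nn_integral_cong) (auto simp: indicator_def)
  next
    assume eq: "turn_angle \<phi>u = turn_angle \<phi>v"
    show "\<forall>r\<ge>ru. Gm m r = 0"
    proof (rule ccontr)
      assume "\<not> ?thesis"
      then obtain rs where rs: "rs \<ge> ru" "Gm m rs \<noteq> 0" by blast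
      have rs0: "rs > 0" using rs assms(3) by simp
      have ddn: "deriv (deriv m) rs < 0"
        using rs W.ddm_nonpos[OF rs0] W.mpos[OF rs0] by (auto simp: Gm_def)
      obtain d where d: "d > 0" "\<forall>x. x \<noteq> rs \<and> norm (x - rs) < d \<longrightarrow>
          norm (deriv (deriv m) x - deriv (deriv m) rs) < - deriv (deriv m) rs"
        using LIM_D[OF W.cont_ddm[unfolded isCont_def], of "- deriv (deriv m) rs"] ddn by auto
      have ddneg: "deriv (deriv m) x < 0" if "\<bar>x - rs\<bar> < d" for x
        using d(2)[rule_format, of x] that ddn by (cases "x = rs") auto
      define r2 where "r2 = rs + d / 2"
      have r2: "rs < r2" using d by (simp add: r2_def)
      have dec: "deriv m y < deriv m x" if "rs \<le> x" "x < y" "y \<le> r2" for x y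
      proof (rule DERIV_neg_imp_decreasing_open[OF \<open>x < y\<close> _ W.conton_dm])
        fix z assume "x < z" "z < y"
        then have "\<bar>z - rs\<bar> < d" using that d by (simp add: r2_def)
        then show "\<exists>y. (deriv m has_real_derivative y) (at z) \<and> y < 0"
          using W.ddm ddneg by blast
      qed
      define l where "l = m rs / cu"
      define u where "u = m r2 / cu"
      have l1: "l \<ge> 1" using W.m_mono[of ru rs] rs assms(3) cu by (simp add: l_def cu_def)
      have lu: "l < u" using W.m_strict[of rs r2] r2 rs0 cu by (simp add: l_def u_def divide_strict_right_mono)
      have strict: "W.fw cu w < W.fw cv w" if w: "l < w" "w < u" for w
      proof (rule W.fw_less[OF cu cuv])
        show w1: "w > 1" using w l1 by simp
        have cw: "m rs < cu * w" "cu * w < m r2" using w cu by (simp_all add: l_def u_def field_simps)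
        have x1: "rs < W.minv (cu * w)"
          using W.minv_less[of "m rs" "cu * w"] cw W.minv_m[of rs] rs0 W.m_nonneg[of rs] by simp
        have x2: "W.minv (cu * w) < r2"
          using W.minv_less[of "cu * w" "m r2"] cw W.minv_m[of r2] r2 rs0 cu w1 by simp
        fix y assume y: "W.minv (cu * w) < y"
        define y' where "y' = min y r2"
        have "deriv m y' < deriv m (W.minv (cu * w))"
          using dec[of "W.minv (cu * w)" y'] x1 x2 y by (simp add: y'_def)
        moreover have "deriv m y \<le> deriv m y'"
          using W.dm_antimono[of y' y] x1 x2 y rs0 by (simp add: y'_def)
        ultimately show "deriv m y < deriv m (W.minv (cu * w))" by simp
      qed
      have "turn_angle \<phi>u < turn_angle \<phi>v"
        unfolding Tu Tv
      proof (rule nn_integral_less)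
        show "(\<integral>\<^sup>+x. ennreal (W.fw cu x) * indicator {1<..} x \<partial>lborel) \<noteq> \<infinity>"
          using assms(7) Tu by simp
        show "AE x in lborel. ennreal (W.fw cu x) * indicator {1<..} x \<le> ennreal (W.fw cv x) * indicator {1<..} x"
          using le by simp
        show "\<not> (AE x in lborel. ennreal (W.fw cv x) * indicator {1<..} x \<le> ennreal (W.fw cu x) * indicator {1<..} x)"
        proof
          assume AE: "AE x in lborel. ennreal (W.fw cv x) * indicator {1<..} x \<le> ennreal (W.fw cu x) * indicator {1<..} x"
          have "AE x in lborel. x \<notin> {l<..<u}"
            using AE
          proof eventually_elim
            fix x assume x: "ennreal (W.fw cv x) * indicator {1<..} x \<le> ennreal (W.fw cu x) * indicator {1<..} x"
            show "x \<notin> {l<..<u}"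
            proof
              assume xin: "x \<in> {l<..<u}"
              then have "x > 1" using l1 by simp
              then have "W.fw cu x > 0" using W.fw_nonneg[OF cu] by simp
              then have "ennreal (W.fw cu x) < ennreal (W.fw cv x)"
                using strict[of x] xin by (simp add: ennreal_less_iff)
              then show False using x \<open>x > 1\<close> by simp
            qed
          qed
          then have "emeasure lborel {l<..<u} = 0"
            by (subst (asm) AE_iff_measurable[of "{l<..<u}"]) auto
          then show False using lu by simp
        qed
      qed (simp_all add: W.fw_meas)
      then show False using eq by simp
    qed
  qed
  show ?thesis using part1 part2 by blast
qed

end
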